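(* In the standing setting, fix $T>0$ and $|\xi|=1$. For all disjoint subsets $F,H\subset\mathbb N$ with $F$ finite and nonempty, $\delta^F_\xi\phi^H_T$ solves weakly in $\mathbb R^d$ $$\tfrac1T\delta^F_\xi\phi^H_T-\nabla\cdot A^{F\cup H}\nabla\delta^F_\xi\phi^H_T=\sum_{S\subset F}(-1)^{|S|+1}\nabla\cdot C_{S\|H\cup(F\setminus S)}\nabla\delta^{F\setminus S}_\xi\phi^H_T,$$ $$\tfrac1T\delta^F_\xi\phi^H_T-\nabla\cdot A^{H}\nabla\delta^F_\xi\phi^H_T=\sum_{S\subset F}(-1)^{|S|+1}\nabla\cdot C_{S\|H}\nabla\delta^{F\setminus S}_\xi\phi^{S\cup H}_T.$$ More generally, for all pairwise disjoint $F,G,H\subset\mathbb N$ with $F,G$ finite and $F\cup G\ne\varnothing$, $\delta^{F\cup G}_\xi\phi^H_T$ solves weakly in $\mathbb R^d$ $$\tfrac1T\delta^{F\cup G}_\xi\phi^H_T-\nabla\cdot A^{F\cup H}\nabla\delta^{F\cup G}_\xi\phi^H_T=\sum_{S\subset F}\sum_{U\subset G}(-1)^{|S|+|U|+1}\nabla\cdot C_{S\cup U\|H\cup(F\setminus S)}\nabla\delta_\xi^{(F\setminus S)\cup(G\setminus U)}\phi^{U\cup H}_T.$$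
   Context: Standing setting. $A,A'$ are $\mathbb R^{d\times d}$-valued (symmetric, uniformly elliptic) coefficient fields on $\mathbb R^d$, $(J_n)_{n\in\mathbb N}$ bounded Borel inclusions with at most $\Gamma$ of them containing any given point. For $E\subset\mathbb N$: $J^E=\bigcup_{n\in E}J_n$, $C^E=(A'-A)\mathbb 1_{J^E}$, $A^E=A+C^E$. For nonempty $E$ and any $F$: $J_{E\|F}=(\bigcap_{n\in E}J_n)\setminus\bigcup_{n\in F}J_n$, $C_{E\|F}=(A'-A)\mathbb 1_{J_{E\|F}}$, $C_E=C_{E\|\varnothing}$; by convention $C_{\varnothing\|F}=C_\varnothing=0$. For fixed $\xi$ and $T>0$, $\phi^E_T$ is the unique solution in $\{v\in H^1_{loc}(\mathbb R^d):\sup_z\int_{B_1(z)}(v^2+|\nabla v|^2)<\infty\}$ of $\frac1T\phi^E_T-\nabla\cdot A^E(\nabla\phi^E_T+\xi)=0$. Difference operators: for finite $F$ and any $H$, $\delta^F_\xi\phi^H_T=\sum_{G\subset F}(-1)^{|F\setminus G|}(\phi^{G\cup H}_T+\xi\cdot x)$, so $\nabla\delta^F_\xi\phi^H_T=\sum_{G\subset F}(-1)^{|F\setminus G|}(\nabla\phi^{G\cup H}_T+\xi)$; in particular $\nabla\delta^\varnothing_\xi\phi^H_T=\nabla\phi^H_T+\xi$. *)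

theory Defs
  imports "HOL-Analysis.Analysis"
begin

text \<open>Space R^d is modelled as real^'n for a finite index type 'n (d = CARD('n)).
  Coefficient fields are matrix-valued functions real^'n => real^'n^'n.\<close>

definition test_fn :: "(real^'n \<Rightarrow> real) \<Rightarrow> (real^'n \<Rightarrow> real^'n) \<Rightarrow> bool" where
  "test_fn \<psi> g \<longleftrightarrow>
     (\<forall>x. (\<psi> has_derivative (\<lambda>h. g x \<bullet> h)) (at x)) \<and> continuous_on UNIV g \<and>
     compact (closure {x. \<psi> x \<noteq> 0})"

definition weak_grad :: "(real^'n \<Rightarrow> real) \<Rightarrow> (real^'n \<Rightarrow> real^'n) \<Rightarrow> bool" where
  "weak_grad v G \<longleftrightarrow>
     (\<forall>\<psi> g. test_fn \<psi> g \<longrightarrow> (\<forall>i.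
        integrable lborel (\<lambda>x. v x * g x $ i) \<and> integrable lborel (\<lambda>x. G x $ i * \<psi> x) \<and>
        (\<integral>x. v x * g x $ i \<partial>lborel) = - (\<integral>x. G x $ i * \<psi> x \<partial>lborel)))"

definition H1_uloc :: "(real^'n \<Rightarrow> real) \<Rightarrow> (real^'n \<Rightarrow> real^'n) \<Rightarrow> bool" where
  "H1_uloc v G \<longleftrightarrow>
     v \<in> borel_measurable lborel \<and> G \<in> borel_measurable lborel \<and> weak_grad v G \<and>
     (\<exists>M. \<forall>z. set_integrable lborel (ball z 1) (\<lambda>x. (v x)\<^sup>2 + (norm (G x))\<^sup>2) \<and>
              (LINT x:ball z 1|lborel. (v x)\<^sup>2 + (norm (G x))\<^sup>2) \<le> M)"

text \<open>Weak formulation of  (1/T) u - div q = div f  in R^d.\<close>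
definition weak_sol :: "real \<Rightarrow> (real^'n \<Rightarrow> real) \<Rightarrow> (real^'n \<Rightarrow> real^'n) \<Rightarrow> (real^'n \<Rightarrow> real^'n) \<Rightarrow> bool" where
  "weak_sol T u q f \<longleftrightarrow>
     (\<forall>\<psi> g. test_fn \<psi> g \<longrightarrow>
        integrable lborel (\<lambda>x. u x * \<psi> x) \<and> integrable lborel (\<lambda>x. q x \<bullet> g x) \<and>
        integrable lborel (\<lambda>x. f x \<bullet> g x) \<and>
        (1 / T) * (\<integral>x. u x * \<psi> x \<partial>lborel) + (\<integral>x. q x \<bullet> g x \<partial>lborel)
          = - (\<integral>x. f x \<bullet> g x \<partial>lborel))"

definition sym_unif_elliptic :: "(real^'n \<Rightarrow> real^'n^'n) \<Rightarrow> bool" where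
  "sym_unif_elliptic A \<longleftrightarrow>
     (\<forall>i j. (\<lambda>x. A x $ i $ j) \<in> borel_measurable lborel) \<and>
     (\<forall>x. transpose (A x) = A x) \<and>
     (\<exists>c>0. \<forall>x v. c * (norm v)\<^sup>2 \<le> v \<bullet> (A x *v v) \<and> norm (A x *v v) \<le> norm v / c)"

definition JU :: "(nat \<Rightarrow> (real^'n) set) \<Rightarrow> nat set \<Rightarrow> (real^'n) set" where
  "JU J E = (\<Union>n\<in>E. J n)"

definition CU :: "(real^'n \<Rightarrow> real^'n^'n) \<Rightarrow> (real^'n \<Rightarrow> real^'n^'n) \<Rightarrow> (nat \<Rightarrow> (real^'n) set)
     \<Rightarrow> nat set \<Rightarrow> real^'n \<Rightarrow> real^'n^'n" where
  "CU A A' J E x = (if x \<in> JU J E then A' x - A x else 0)"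

definition AU :: "(real^'n \<Rightarrow> real^'n^'n) \<Rightarrow> (real^'n \<Rightarrow> real^'n^'n) \<Rightarrow> (nat \<Rightarrow> (real^'n) set)
     \<Rightarrow> nat set \<Rightarrow> real^'n \<Rightarrow> real^'n^'n" where
  "AU A A' J E x = A x + CU A A' J E x"

definition Jsep :: "(nat \<Rightarrow> (real^'n) set) \<Rightarrow> nat set \<Rightarrow> nat set \<Rightarrow> (real^'n) set" where
  "Jsep J E F = (\<Inter>n\<in>E. J n) - (\<Union>n\<in>F. J n)"

definition Csep :: "(real^'n \<Rightarrow> real^'n^'n) \<Rightarrow> (real^'n \<Rightarrow> real^'n^'n) \<Rightarrow> (nat \<Rightarrow> (real^'n) set)
     \<Rightarrow> nat set \<Rightarrow> nat set \<Rightarrow> real^'n \<Rightarrow> real^'n^'n" where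
  "Csep A A' J E F x = (if E \<noteq> {} \<and> x \<in> Jsep J E F then A' x - A x else 0)"

definition delta :: "(nat set \<Rightarrow> real^'n \<Rightarrow> real) \<Rightarrow> real^'n \<Rightarrow> nat set \<Rightarrow> nat set \<Rightarrow> real^'n \<Rightarrow> real" where
  "delta phi \<xi> F H x = (\<Sum>G\<in>Pow F. (-1) ^ card (F - G) * (phi (G \<union> H) x + \<xi> \<bullet> x))"

definition gdelta :: "(nat set \<Rightarrow> real^'n \<Rightarrow> real^'n) \<Rightarrow> real^'n \<Rightarrow> nat set \<Rightarrow> nat set \<Rightarrow> real^'n \<Rightarrow> real^'n" where
  "gdelta Dphi \<xi> F H x = (\<Sum>G\<in>Pow F. ((-1) ^ card (F - G)) *\<^sub>R (Dphi (G \<union> H) x + \<xi>))"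

end

theory Submission
  imports Defs
begin


definition gd :: "(nat set \<Rightarrow> 'a::real_vector) \<Rightarrow> nat set \<Rightarrow> nat set \<Rightarrow> 'a" where
  "gd v P Q = (\<Sum>W\<in>Pow P. ((-1::real) ^ card (P - W)) *\<^sub>R v (W \<union> Q))"

lemma gd_insert:
  assumes "finite P" "r \<notin> P"
  shows "gd v (insert r P) Q = gd v P (insert r Q) - gd v P Q"
proof -
  have disj: "Pow P \<inter> insert r ` Pow P = {}" using assms(2) by auto
  have inj: "inj_on (insert r) (Pow P)" using assms(2) by (intro inj_onI) (metis Diff_insert_absorb PowD in_mono)
  have "gd v (insert r P) Q = (\<Sum>W\<in>Pow P. ((-1::real) ^ card (insert r P - W)) *\<^sub>R v (W \<union> Q))
      + (\<Sum>W\<in>insert r ` Pow P. ((-1::real) ^ card (insert r P - W)) *\<^sub>R v (W \<union> Q))"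
    unfolding gd_def Pow_insert using assms disj by (simp add: sum.union_disjoint)
  also have "(\<Sum>W\<in>Pow P. ((-1::real) ^ card (insert r P - W)) *\<^sub>R v (W \<union> Q))
      = - gd v P Q"
    unfolding gd_def sum_negf[symmetric]
  proof (rule sum.cong[OF refl])
    fix W assume "W \<in> Pow P"
    then have "insert r P - W = insert r (P - W)" "r \<notin> P - W" "finite (P - W)" using assms by auto
    then show "(-1::real) ^ card (insert r P - W) *\<^sub>R v (W \<union> Q) = - ((-1) ^ card (P - W) *\<^sub>R v (W \<union> Q))"
      by simp
  qed
  also have "(\<Sum>W\<in>insert r ` Pow P. ((-1::real) ^ card (insert r P - W)) *\<^sub>R v (W \<union> Q))
      = gd v P (insert r Q)"
    unfolding gd_def sum.reindex[OF inj] o_def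
  proof (rule sum.cong[OF refl])
    fix W assume "W \<in> Pow P"
    then have "insert r P - insert r W = P - W" using assms by auto
    moreover have "insert r W \<union> Q = W \<union> insert r Q" by auto
    ultimately show "(-1::real) ^ card (insert r P - insert r W) *\<^sub>R v (insert r W \<union> Q) = (-1) ^ card (P - W) *\<^sub>R v (W \<union> insert r Q)"
      by simp
  qed
  finally show ?thesis by simp
qed

lemma gd_alt:
  assumes "finite R" "P \<inter> R = {}" "finite P"
  shows "(\<Sum>U\<in>Pow R. ((-1::real) ^ card U) *\<^sub>R gd v (P \<union> (R - U)) (U \<union> Q)) = ((-1) ^ card R) *\<^sub>R gd v P Q"
  using assms
proof (induction R rule: finite_induct)
  case empty
  then show ?case by simp
next
  case (insert r R)
  have disj: "Pow R \<inter> insert r ` Pow R = {}" using insert by auto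
  have inj: "inj_on (insert r) (Pow R)" using insert by (intro inj_onI) (metis Diff_insert_absorb PowD in_mono)
  have IH: "(\<Sum>U\<in>Pow R. ((-1::real) ^ card U) *\<^sub>R gd v (P \<union> (R - U)) (U \<union> Q)) = ((-1) ^ card R) *\<^sub>R gd v P Q"
    using insert by auto
  have "(\<Sum>U\<in>Pow (insert r R). ((-1::real) ^ card U) *\<^sub>R gd v (P \<union> (insert r R - U)) (U \<union> Q))
    = (\<Sum>U\<in>Pow R. ((-1::real) ^ card U) *\<^sub>R gd v (P \<union> (insert r R - U)) (U \<union> Q))
     + (\<Sum>U\<in>Pow R. ((-1::real) ^ card (insert r U)) *\<^sub>R gd v (P \<union> (insert r R - insert r U)) (insert r U \<union> Q))"
    unfolding Pow_insert using insert disj by (simp add: sum.union_disjoint sum.reindex[OF inj])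
  also have "\<dots> = - (\<Sum>U\<in>Pow R. ((-1::real) ^ card U) *\<^sub>R gd v (P \<union> (R - U)) (U \<union> Q))"
    unfolding sum_negf[symmetric] sum.distrib[symmetric]
  proof (rule sum.cong[OF refl])
    fix U assume U: "U \<in> Pow R"
    have e1: "P \<union> (insert r R - U) = insert r (P \<union> (R - U))" using U insert by auto
    have e2: "P \<union> (insert r R - insert r U) = P \<union> (R - U)" using U insert by auto
    have c: "card (insert r U) = Suc (card U)" using U insert by (meson PowD finite_subset card_insert_disjoint subsetD)
    have gi: "gd v (insert r (P \<union> (R - U))) (U \<union> Q) = gd v (P \<union> (R - U)) (insert r (U \<union> Q)) - gd v (P \<union> (R - U)) (U \<union> Q)"
      by (rule gd_insert) (use U insert in auto)
    show "(-1::real) ^ card U *\<^sub>R gd v (P \<union> (insert r R - U)) (U \<union> Q) +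
         (-1) ^ card (insert r U) *\<^sub>R gd v (P \<union> (insert r R - insert r U)) (insert r U \<union> Q) =
         - ((-1) ^ card U *\<^sub>R gd v (P \<union> (R - U)) (U \<union> Q))"
      unfolding e1 e2 c gi by (simp add: algebra_simps)
  qed
  finally show ?case using IH insert by simp
qed

lemma sum_Pow_insert:
  assumes "finite X" "r \<notin> X"
  shows "(\<Sum>W\<in>Pow (insert r X). f W) = (\<Sum>W\<in>Pow X. f W) + (\<Sum>W\<in>Pow X. f (insert r W))"
proof -
  have disj: "Pow X \<inter> insert r ` Pow X = {}" using assms(2) by auto
  have inj: "inj_on (insert r) (Pow X)" using assms(2) by (intro inj_onI) (metis Diff_insert_absorb PowD in_mono)
  show ?thesis unfolding Pow_insert using assms disj by (simp add: sum.union_disjoint sum.reindex[OF inj])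
qed

lemma gd_ind:
  assumes "finite X"
  shows "(\<Sum>W\<in>Pow X. ((-1::real) ^ card (X - W)) *\<^sub>R (if (\<exists>n\<in>W. act n) then v (W \<union> Q) else 0))
     = gd v X Q - ((-1::real) ^ card (X \<inter> {n. act n})) *\<^sub>R gd v (X - {n. act n}) Q"
  using assms
proof (induction X arbitrary: Q rule: finite_induct)
  case empty
  then show ?case by (simp add: gd_def)
next
  case (insert r X)
  let ?K = "{n. act n}"
  have fX: "finite (X - ?K)" using insert by auto
  have cW: "\<And>W. W \<in> Pow X \<Longrightarrow> card (insert r X - W) = Suc (card (X - W)) \<and> insert r X - insert r W = X - W"
    using insert by (auto intro!: card_insert_disjoint simp: insert_Diff_if)
  have XW: "\<And>W. X - insert r W = X - W" using insert(2) by auto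
  have L: "(\<Sum>W\<in>Pow (insert r X). ((-1::real) ^ card (insert r X - W)) *\<^sub>R (if (\<exists>n\<in>W. act n) then v (W \<union> Q) else 0))
     = - (\<Sum>W\<in>Pow X. ((-1::real) ^ card (X - W)) *\<^sub>R (if (\<exists>n\<in>W. act n) then v (W \<union> Q) else 0))
       + (\<Sum>W\<in>Pow X. ((-1::real) ^ card (X - W)) *\<^sub>R (if (\<exists>n\<in>insert r W. act n) then v (W \<union> insert r Q) else 0))"
    unfolding sum_Pow_insert[OF insert(1,2)] sum_negf[symmetric]
    using insert(2) by (intro arg_cong2[where f="(+)"] sum.cong refl) (auto simp: cW XW)
  show ?case
  proof (cases "act r")
    case True
    have s2: "(\<Sum>W\<in>Pow X. ((-1::real) ^ card (X - W)) *\<^sub>R (if (\<exists>n\<in>insert r W. act n) then v (W \<union> insert r Q) else 0)) = gd v X (insert r Q)"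
      unfolding gd_def using True by (intro sum.cong) auto
    have e1: "insert r X \<inter> ?K = insert r (X \<inter> ?K)" "insert r X - ?K = X - ?K" using True by auto
    have c: "card (insert r (X \<inter> ?K)) = Suc (card (X \<inter> ?K))" using insert by (intro card_insert_disjoint) auto
    show ?thesis unfolding L s2 insert(3) e1 c gd_insert[OF insert(1,2)] by (simp add: algebra_simps)
  next
    case False
    have s2: "(\<Sum>W\<in>Pow X. ((-1::real) ^ card (X - W)) *\<^sub>R (if (\<exists>n\<in>insert r W. act n) then v (W \<union> insert r Q) else 0))
       = (\<Sum>W\<in>Pow X. ((-1::real) ^ card (X - W)) *\<^sub>R (if (\<exists>n\<in>W. act n) then v (W \<union> insert r Q) else 0))"
      using False by (intro sum.cong) auto
    have e1: "insert r X \<inter> ?K = X \<inter> ?K" "insert r X - ?K = insert r (X - ?K)" using False by auto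
    have r: "r \<notin> X - ?K" using insert by auto
    show ?thesis unfolding L s2 insert(3) e1 gd_insert[OF insert(1,2)] gd_insert[OF fX r] by (simp add: algebra_simps)
  qed
qed

lemma comb:
  fixes v :: "nat set \<Rightarrow> 'a::real_vector"
  assumes fF: "finite F" and fG: "finite G" and d1: "F \<inter> G = {}" and d2: "F \<inter> H = {}" and d3: "G \<inter> H = {}"
  shows "(if (\<exists>n\<in>F \<union> H. act n) then gd v (F \<union> G) H else 0)
    + (\<Sum>S\<in>Pow F. \<Sum>U\<in>Pow G. ((-1::real) ^ (card S + card U + 1)) *\<^sub>R
         (if S \<union> U \<noteq> {} \<and> (\<forall>n\<in>S \<union> U. act n) \<and> (\<forall>n\<in>H \<union> (F - S). \<not> act n)
          then gd v ((F - S) \<union> (G - U)) (U \<union> H) else 0))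
    = (\<Sum>W\<in>Pow (F \<union> G). ((-1::real) ^ card ((F \<union> G) - W)) *\<^sub>R
         (if (\<exists>n\<in>W \<union> H. act n) then v (W \<union> H) else 0))"
proof (cases "\<exists>n\<in>H. act n")
  case True
  have a: "(\<Sum>S\<in>Pow F. \<Sum>U\<in>Pow G. ((-1::real) ^ (card S + card U + 1)) *\<^sub>R
         (if S \<union> U \<noteq> {} \<and> (\<forall>n\<in>S \<union> U. act n) \<and> (\<forall>n\<in>H \<union> (F - S). \<not> act n)
          then gd v ((F - S) \<union> (G - U)) (U \<union> H) else 0)) = 0"
    using True by (intro sum.neutral ballI) auto
  have b: "(\<Sum>W\<in>Pow (F \<union> G). ((-1::real) ^ card ((F \<union> G) - W)) *\<^sub>R
         (if (\<exists>n\<in>W \<union> H. act n) then v (W \<union> H) else 0)) = gd v (F \<union> G) H"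
    unfolding gd_def using True by (intro sum.cong refl) auto
  show ?thesis unfolding a b using True by auto
next
  case False
  let ?K = "{n. act n}"
  define S0 where "S0 = F \<inter> ?K"
  define U0 where "U0 = G \<inter> ?K"
  define P0 where "P0 = (F \<union> G) - ?K"
  have fin: "finite S0" "finite U0" "finite P0" "finite (F \<union> G)" using fF fG by (auto simp: S0_def U0_def P0_def)
  have R: "(\<Sum>W\<in>Pow (F \<union> G). ((-1::real) ^ card ((F \<union> G) - W)) *\<^sub>R
         (if (\<exists>n\<in>W \<union> H. act n) then v (W \<union> H) else 0))
      = gd v (F \<union> G) H - ((-1::real) ^ (card S0 + card U0)) *\<^sub>R gd v P0 H"
  proof -
    have "(F \<union> G) \<inter> ?K = S0 \<union> U0" unfolding S0_def U0_def by auto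
    then have "card ((F \<union> G) \<inter> ?K) = card S0 + card U0"
      using fin d1 by (simp add: card_Un_disjoint S0_def U0_def) (metis Int_assoc Int_commute Int_empty_left card_Un_disjoint fin(1) fin(2) S0_def U0_def inf_left_commute)
    moreover have "(\<Sum>W\<in>Pow (F \<union> G). ((-1::real) ^ card ((F \<union> G) - W)) *\<^sub>R
         (if (\<exists>n\<in>W \<union> H. act n) then v (W \<union> H) else 0)) =
        (\<Sum>W\<in>Pow (F \<union> G). ((-1::real) ^ card ((F \<union> G) - W)) *\<^sub>R
         (if (\<exists>n\<in>W. act n) then v (W \<union> H) else 0))"
      using False by (intro sum.cong) auto
    ultimately show ?thesis using gd_ind[OF fin(4), of act v H] unfolding P0_def by simp
  qed
  have cond: "\<And>S U. S \<in> Pow F \<Longrightarrow> U \<in> Pow G \<Longrightarrow>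
     (S \<union> U \<noteq> {} \<and> (\<forall>n\<in>S \<union> U. act n) \<and> (\<forall>n\<in>H \<union> (F - S). \<not> act n))
      = (S = S0 \<and> U \<subseteq> U0 \<and> S0 \<union> U \<noteq> {})"
    using False unfolding S0_def U0_def by auto
  have sets: "\<And>U. U \<subseteq> U0 \<Longrightarrow> (F - S0) \<union> (G - U) = P0 \<union> (U0 - U)"
    unfolding S0_def U0_def P0_def using d1 by auto
  have S0F: "S0 \<in> Pow F" unfolding S0_def by auto
  have PU: "{U \<in> Pow G. U \<subseteq> U0} = Pow U0" unfolding U0_def by auto
  have "(\<Sum>S\<in>Pow F. \<Sum>U\<in>Pow G. ((-1::real) ^ (card S + card U + 1)) *\<^sub>R
         (if S \<union> U \<noteq> {} \<and> (\<forall>n\<in>S \<union> U. act n) \<and> (\<forall>n\<in>H \<union> (F - S). \<not> act n)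
          then gd v ((F - S) \<union> (G - U)) (U \<union> H) else 0))
     = (\<Sum>S\<in>Pow F. if S = S0 then (\<Sum>U\<in>Pow G. if U \<subseteq> U0 then ((-1::real) ^ (card S0 + card U + 1)) *\<^sub>R
         (if S0 \<union> U \<noteq> {} then gd v (P0 \<union> (U0 - U)) (U \<union> H) else 0) else 0) else 0)"
  proof (rule sum.cong[OF refl])
    fix S assume S: "S \<in> Pow F"
    show "(\<Sum>U\<in>Pow G. ((-1::real) ^ (card S + card U + 1)) *\<^sub>R
         (if S \<union> U \<noteq> {} \<and> (\<forall>n\<in>S \<union> U. act n) \<and> (\<forall>n\<in>H \<union> (F - S). \<not> act n)
          then gd v ((F - S) \<union> (G - U)) (U \<union> H) else 0)) = (if S = S0 then (\<Sum>U\<in>Pow G. if U \<subseteq> U0 then ((-1::real) ^ (card S0 + card U + 1)) *\<^sub>R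
         (if S0 \<union> U \<noteq> {} then gd v (P0 \<union> (U0 - U)) (U \<union> H) else 0) else 0) else 0)"
    proof (cases "S = S0")
      case True
      show ?thesis unfolding if_P[OF True]
      proof (rule sum.cong[OF refl])
        fix U assume U: "U \<in> Pow G"
        show "((-1::real) ^ (card S + card U + 1)) *\<^sub>R
         (if S \<union> U \<noteq> {} \<and> (\<forall>n\<in>S \<union> U. act n) \<and> (\<forall>n\<in>H \<union> (F - S). \<not> act n)
          then gd v ((F - S) \<union> (G - U)) (U \<union> H) else 0) = (if U \<subseteq> U0 then ((-1::real) ^ (card S0 + card U + 1)) *\<^sub>R
         (if S0 \<union> U \<noteq> {} then gd v (P0 \<union> (U0 - U)) (U \<union> H) else 0) else 0)"
          unfolding cond[OF S U] using True sets by auto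
      qed
    next
      case False
      then show ?thesis using cond[OF S] by (intro trans[OF sum.neutral]) auto
    qed
  qed
  also have "\<dots> = (\<Sum>U\<in>Pow U0. ((-1::real) ^ (card S0 + card U + 1)) *\<^sub>R
         (if S0 \<union> U \<noteq> {} then gd v (P0 \<union> (U0 - U)) (U \<union> H) else 0))"
    unfolding sum.inter_filter[OF finite_Pow_iff[THEN iffD2, OF fG], symmetric] PU
    using S0F fF by (simp only: sum.delta finite_Pow_iff if_True)
  finally have L2: "(\<Sum>S\<in>Pow F. \<Sum>U\<in>Pow G. ((-1::real) ^ (card S + card U + 1)) *\<^sub>R
         (if S \<union> U \<noteq> {} \<and> (\<forall>n\<in>S \<union> U. act n) \<and> (\<forall>n\<in>H \<union> (F - S). \<not> act n)
          then gd v ((F - S) \<union> (G - U)) (U \<union> H) else 0)) = (\<Sum>U\<in>Pow U0. ((-1::real) ^ (card S0 + card U + 1)) *\<^sub>R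
         (if S0 \<union> U \<noteq> {} then gd v (P0 \<union> (U0 - U)) (U \<union> H) else 0))" .
  have PU0: "P0 \<inter> U0 = {}" unfolding P0_def U0_def by auto
  have alt: "(\<Sum>U\<in>Pow U0. ((-1::real) ^ card U) *\<^sub>R gd v (P0 \<union> (U0 - U)) (U \<union> H)) = ((-1) ^ card U0) *\<^sub>R gd v P0 H"
    by (rule gd_alt[OF fin(2) PU0 fin(3)])
  have FHact: "(\<exists>n\<in>F \<union> H. act n) = (S0 \<noteq> {})" using False unfolding S0_def by auto
  show ?thesis
  proof (cases "S0 = {}")
    case False
    have "(\<Sum>U\<in>Pow U0. ((-1::real) ^ (card S0 + card U + 1)) *\<^sub>R
         (if S0 \<union> U \<noteq> {} then gd v (P0 \<union> (U0 - U)) (U \<union> H) else 0))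
      = (- ((-1::real) ^ card S0)) *\<^sub>R (\<Sum>U\<in>Pow U0. ((-1::real) ^ card U) *\<^sub>R gd v (P0 \<union> (U0 - U)) (U \<union> H))"
      unfolding scaleR_sum_right using False by (intro sum.cong refl) (simp add: power_add)
    then show ?thesis unfolding L2 R alt using False FHact by (simp add: power_add)
  next
    case True
    have e: "P0 \<union> U0 = F \<union> G" using True unfolding P0_def U0_def S0_def by auto
    have z: "{} \<in> Pow U0" by simp
    have "(\<Sum>U\<in>Pow U0. ((-1::real) ^ (card S0 + card U + 1)) *\<^sub>R
         (if S0 \<union> U \<noteq> {} then gd v (P0 \<union> (U0 - U)) (U \<union> H) else 0))
      = (\<Sum>U\<in>Pow U0 - {{}}. - (((-1::real) ^ card U) *\<^sub>R gd v (P0 \<union> (U0 - U)) (U \<union> H)))"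
      using True fin by (simp add: sum.remove[OF _ z])
    also have "\<dots> = - ((-1) ^ card U0) *\<^sub>R gd v P0 H + gd v (F \<union> G) H"
    proof -
      have "(\<Sum>U\<in>Pow U0. ((-1::real) ^ card U) *\<^sub>R gd v (P0 \<union> (U0 - U)) (U \<union> H))
        = gd v (F \<union> G) H + (\<Sum>U\<in>Pow U0 - {{}}. ((-1::real) ^ card U) *\<^sub>R gd v (P0 \<union> (U0 - U)) (U \<union> H))"
        using fin e by (subst sum.remove[OF _ z]) auto
      then show ?thesis unfolding sum_negf using alt by (simp add: algebra_simps)
    qed
    finally show ?thesis unfolding L2 R using True FHact by simp
  qed
qed



lemma test_fn_zero:
  assumes "test_fn \<psi> g" "x \<notin> closure {x. \<psi> x \<noteq> 0}"
  shows "g x = 0"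
proof -
  let ?O = "- closure {x. \<psi> x \<noteq> 0}"
  have d: "(\<psi> has_derivative (\<lambda>h. g x \<bullet> h)) (at x)" using assms(1) unfolding test_fn_def by auto
  have "((\<lambda>_. 0::real) has_derivative (\<lambda>h. g x \<bullet> h)) (at x)"
  proof (rule has_derivative_transform_within_open[OF d, of ?O])
    fix y assume "y \<in> ?O"
    then show "\<psi> y = 0" using closure_subset[of "{x. \<psi> x \<noteq> 0}"] by auto
  qed (use assms(2) in auto)
  moreover have "((\<lambda>_. 0::real) has_derivative (\<lambda>h. 0)) (at x)" by simp
  ultimately have "(\<lambda>h. g x \<bullet> h) = (\<lambda>h. 0)" by (rule has_derivative_unique)
  then have "g x \<bullet> g x = 0" by metis
  then show ?thesis by simp
qed

lemma test_fn_bound: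
  assumes "test_fn \<psi> g"
  obtains Gm where "Gm \<ge> 0" "\<And>x. norm (g x) \<le> Gm"
proof -
  let ?K = "closure {x. \<psi> x \<noteq> 0}"
  have K: "compact ?K" and c: "continuous_on UNIV g" using assms unfolding test_fn_def by auto
  have "compact (g ` ?K)" by (rule compact_continuous_image[OF continuous_on_subset[OF c]]) (use K in auto)
  then obtain B where B: "\<forall>y\<in>g ` ?K. norm y \<le> B" using compact_imp_bounded bounded_iff by metis
  show ?thesis
  proof (rule that[of "max B 0"])
    fix x show "norm (g x) \<le> max B 0"
      using B test_fn_zero[OF assms, of x] by (cases "x \<in> ?K") auto
  qed simp
qed

definition bm :: "(real^'n \<Rightarrow> real^'n^'n) \<Rightarrow> bool" where
  "bm M \<longleftrightarrow> (\<forall>i j. (\<lambda>x. M x $ i $ j) \<in> borel_measurable lborel) \<and> (\<exists>B. \<forall>x i j. \<bar>M x $ i $ j\<bar> \<le> B)"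

lemma mv_inner: fixes M :: "real^'n^'n" shows "(M *v w) \<bullet> g = (\<Sum>i\<in>UNIV. \<Sum>j\<in>UNIV. M $ i $ j * w $ j * g $ i)"
  unfolding inner_vec_def matrix_vector_mult_def inner_real_def vec_lambda_beta sum_distrib_right ..

lemma loc_int:
  fixes p :: "real^'n \<Rightarrow> real" and D :: "real^'n \<Rightarrow> real^'n"
  assumes H: "H1_uloc p D" and M: "bm M" and tf: "test_fn \<psi> g"
  shows "integrable lborel (\<lambda>x. (M x *v (D x + \<xi>)) \<bullet> g x)"
proof -
  let ?K = "closure {x. \<psi> x \<noteq> 0}"
  have K: "compact ?K" and gc: "continuous_on UNIV g" using tf unfolding test_fn_def by auto
  obtain Z where Z: "Z \<subseteq> ?K" "finite Z" "?K \<subseteq> (\<Union>z\<in>Z. ball z 1)"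
    by (rule compactE_image[OF K, of ?K "\<lambda>z. ball z 1"]) auto
  obtain Gm where Gm: "Gm \<ge> 0" "\<And>x. norm (g x) \<le> Gm" using test_fn_bound[OF tf] by blast
  obtain B where B: "\<And>x i j. \<bar>M x $ i $ j\<bar> \<le> B" using M unfolding bm_def by auto
  have B0: "B \<ge> 0" using B[of undefined undefined undefined] by linarith
  have Dm: "D \<in> borel_measurable lborel" and pm: "p \<in> borel_measurable lborel"
    using H unfolding H1_uloc_def by blast+
  obtain M0 where M0: "\<forall>z. set_integrable lborel (ball z 1) (\<lambda>x. (p x)\<^sup>2 + (norm (D x))\<^sup>2) \<and>
              (LINT x:ball z 1|lborel. (p x)\<^sup>2 + (norm (D x))\<^sup>2) \<le> M0"
    using H unfolding H1_uloc_def by blast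
  have Hb: "\<And>z. set_integrable lborel (ball z 1) (\<lambda>x. (p x)\<^sup>2 + (norm (D x))\<^sup>2)" using M0 by blast
  define h where "h x = (B * Gm * (1 + norm \<xi>)) * (\<Sum>z\<in>Z. indicator (ball z 1) x * (1 + (p x)\<^sup>2 + (norm (D x))\<^sup>2))" for x
  have hi: "integrable lborel h"
    unfolding h_def
  proof (intro Bochner_Integration.integrable_mult_right Bochner_Integration.integrable_sum)
    fix z assume "z \<in> Z"
    have "integrable lborel (\<lambda>x. indicator (ball z 1) x + indicator (ball z 1) x *\<^sub>R ((p x)\<^sup>2 + (norm (D x))\<^sup>2))"
      using Hb[of z] unfolding set_integrable_def
      by (intro Bochner_Integration.integrable_add[OF integrable_real_indicator]) (auto simp: emeasure_lborel_ball_finite[unfolded infinity_ennreal_def])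
    then show "integrable lborel (\<lambda>x. indicator (ball z 1) x * (1 + (p x)\<^sup>2 + (norm (D x))\<^sup>2))"
      by (simp add: algebra_simps)
  qed
  have trm: "integrable lborel (\<lambda>x. M x $ i $ j * (D x + \<xi>) $ j * g x $ i)" for i j
  proof (rule Bochner_Integration.integrable_bound[OF hi])
    have gm: "g \<in> borel_measurable lborel"
      unfolding measurable_cong_sets[OF sets_lborel refl] by (rule borel_measurable_continuous_onI[OF gc])
    have Dj: "(\<lambda>x. D x $ j) \<in> borel_measurable lborel" by (rule measurable_compose[OF Dm borel_measurable_nth])
    have gi': "(\<lambda>x. g x $ i) \<in> borel_measurable lborel" by (rule measurable_compose[OF gm borel_measurable_nth])
    have Mij: "(\<lambda>x. M x $ i $ j) \<in> borel_measurable lborel" using M unfolding bm_def by blast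
    show "(\<lambda>x. M x $ i $ j * (D x + \<xi>) $ j * g x $ i) \<in> borel_measurable lborel"
      unfolding vector_add_component by (intro borel_measurable_times borel_measurable_add Dj gi' Mij borel_measurable_const)
    show "AE x in lborel. norm (M x $ i $ j * (D x + \<xi>) $ j * g x $ i) \<le> norm (h x)"
    proof (rule AE_I2)
      fix x
      have hx0: "0 \<le> (\<Sum>z\<in>Z. indicator (ball z 1) x * (1 + (p x)\<^sup>2 + (norm (D x))\<^sup>2))"
        by (intro sum_nonneg) auto
      have h0: "0 \<le> h x" unfolding h_def using B0 Gm(1) hx0 by simp
      show "norm (M x $ i $ j * (D x + \<xi>) $ j * g x $ i) \<le> norm (h x)"
      proof (cases "x \<in> ?K")
        case False
        then show ?thesis using test_fn_zero[OF tf False] h0 by simp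
      next
        case True
        then obtain z where z: "z \<in> Z" "x \<in> ball z 1" using Z by auto
        have "1 + (p x)\<^sup>2 + (norm (D x))\<^sup>2 = indicator (ball z 1) x * (1 + (p x)\<^sup>2 + (norm (D x))\<^sup>2)"
          using z by simp
        also have "\<dots> \<le> (\<Sum>z\<in>Z. indicator (ball z 1) x * (1 + (p x)\<^sup>2 + (norm (D x))\<^sup>2))"
          by (rule member_le_sum[OF z(1)]) (auto simp: Z)
        finally have s: "1 + (p x)\<^sup>2 + (norm (D x))\<^sup>2 \<le> (\<Sum>z\<in>Z. indicator (ball z 1) x * (1 + (p x)\<^sup>2 + (norm (D x))\<^sup>2))" .
        have w1: "\<bar>(D x + \<xi>) $ j\<bar> \<le> norm (D x) + norm \<xi>"
          using component_le_norm_cart[of "D x + \<xi>" j] norm_triangle_ineq[of "D x" \<xi>] by linarith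
        have nD: "norm (D x) \<le> 1 + (norm (D x))\<^sup>2" 
        proof -
          have "0 \<le> (norm (D x) - 1)\<^sup>2" by simp
          then have "2 * norm (D x) \<le> (norm (D x))\<^sup>2 + 1" unfolding power2_diff by simp
          then show ?thesis using norm_ge_zero[of "D x"] by linarith
        qed
        have w2: "\<bar>(D x + \<xi>) $ j\<bar> \<le> (1 + norm \<xi>) * (1 + (p x)\<^sup>2 + (norm (D x))\<^sup>2)"
        proof -
          have "norm \<xi> * 1 \<le> norm \<xi> * (1 + (p x)\<^sup>2 + (norm (D x))\<^sup>2)"
            by (intro mult_left_mono) auto
          moreover have "(1 + norm \<xi>) * (1 + (p x)\<^sup>2 + (norm (D x))\<^sup>2) = (1 + (p x)\<^sup>2 + (norm (D x))\<^sup>2) + norm \<xi> * (1 + (p x)\<^sup>2 + (norm (D x))\<^sup>2)"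
            by (simp add: distrib_right)
          moreover have "0 \<le> (p x)\<^sup>2" by simp
          ultimately show ?thesis using w1 nD by linarith
        qed
        have w3: "\<bar>(D x + \<xi>) $ j\<bar> \<le> (1 + norm \<xi>) * (\<Sum>z\<in>Z. indicator (ball z 1) x * (1 + (p x)\<^sup>2 + (norm (D x))\<^sup>2))"
        proof -
          have "0 \<le> 1 + norm \<xi>" by (simp add: add_nonneg_nonneg)
          from mult_left_mono[OF s this] w2 show ?thesis by linarith
        qed
        have gi: "\<bar>g x $ i\<bar> \<le> Gm" using component_le_norm_cart[of "g x" i] Gm(2)[of x] by linarith
        have "norm (M x $ i $ j * (D x + \<xi>) $ j * g x $ i) = \<bar>M x $ i $ j\<bar> * \<bar>(D x + \<xi>) $ j\<bar> * \<bar>g x $ i\<bar>"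
          by (simp add: abs_mult)
        also have "\<dots> \<le> B * ((1 + norm \<xi>) * (\<Sum>z\<in>Z. indicator (ball z 1) x * (1 + (p x)\<^sup>2 + (norm (D x))\<^sup>2))) * Gm"
          by (intro mult_mono B w3 gi mult_nonneg_nonneg B0 hx0) auto
        also have "\<dots> = h x" unfolding h_def by (simp add: algebra_simps)
        finally show ?thesis using h0 by simp
      qed
    qed
  qed
  have eq: "(\<lambda>x. (M x *v (D x + \<xi>)) \<bullet> g x) = (\<lambda>x. \<Sum>i\<in>UNIV. \<Sum>j\<in>UNIV. M x $ i $ j * (D x + \<xi>) $ j * g x $ i)"
    by (simp only: mv_inner)
  show ?thesis unfolding eq by (intro Bochner_Integration.integrable_sum trm)
qed



lemma sue_entry:
  assumes "sym_unif_elliptic A"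
  shows "\<exists>B. \<forall>x i j. \<bar>A x $ i $ j\<bar> \<le> B"
proof -
  obtain c where c: "c > 0" "\<And>x v. norm (A x *v v) \<le> norm v / c"
    using assms unfolding sym_unif_elliptic_def by blast
  have "\<bar>A x $ i $ j\<bar> \<le> 1 / c" for x i j
  proof -
    have "A x $ i $ j = (A x *v axis j 1) $ i" unfolding matrix_vector_mult_basis column_def by simp
    then have "\<bar>A x $ i $ j\<bar> \<le> norm (A x *v axis j 1)" using component_le_norm_cart by metis
    also have "\<dots> \<le> 1 / c" using c(2)[of x "axis j 1"] by (simp add: norm_axis_1)
    finally show ?thesis .
  qed
  then show ?thesis by blast
qed

lemma Jsep_sets:
  assumes "\<And>n. J n \<in> sets borel" "E \<noteq> {}"
  shows "Jsep J E L \<in> sets lborel"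
  unfolding Jsep_def sets_lborel
  using assms by (intro sets.Diff sets.countable_INT' sets.countable_UN') auto

lemma bm_Csep:
  assumes A: "sym_unif_elliptic A" and A': "sym_unif_elliptic A'" and J: "\<And>n. J n \<in> sets borel"
  shows "bm (Csep A A' J E L)"
proof -
  obtain B1 where B1: "\<And>x i j. \<bar>A x $ i $ j\<bar> \<le> B1" using sue_entry[OF A] by blast
  obtain B2 where B2: "\<And>x i j. \<bar>A' x $ i $ j\<bar> \<le> B2" using sue_entry[OF A'] by blast
  have meas: "(\<lambda>x. Csep A A' J E L x $ i $ j) \<in> borel_measurable lborel" for i j
  proof (cases "E = {}")
    case True
    then show ?thesis unfolding Csep_def by simp
  next
    case False
    have m1: "(\<lambda>x. A x $ i $ j) \<in> borel_measurable lborel" "(\<lambda>x. A' x $ i $ j) \<in> borel_measurable lborel"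
      using A A' unfolding sym_unif_elliptic_def by auto
    have "(\<lambda>x. if x \<in> Jsep J E L then A' x $ i $ j - A x $ i $ j else 0) \<in> borel_measurable lborel"
      by (rule measurable_If_set) (use m1 Jsep_sets[OF J False] in auto)
    moreover have "(\<lambda>x. Csep A A' J E L x $ i $ j) = (\<lambda>x. if x \<in> Jsep J E L then A' x $ i $ j - A x $ i $ j else 0)"
      unfolding Csep_def using False by auto
    ultimately show ?thesis by simp
  qed
  have "\<bar>Csep A A' J E L x $ i $ j\<bar> \<le> B1 + B2" for x i j
    unfolding Csep_def using B1[of x i j] B2[of x i j] by auto
  then show ?thesis unfolding bm_def using meas by blast
qed

definition LI :: "(real^'n \<Rightarrow> real^'n) \<Rightarrow> bool" where
  "LI w \<longleftrightarrow> (\<forall>\<psi> g M. test_fn \<psi> g \<longrightarrow> bm M \<longrightarrow> integrable lborel (\<lambda>x. (M x *v w x) \<bullet> g x))"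

lemma LI_sum:
  fixes w :: "'i \<Rightarrow> real^'n \<Rightarrow> real^'n"
  assumes "finite I" "\<And>i. i \<in> I \<Longrightarrow> LI (w i)"
  shows "LI (\<lambda>x. \<Sum>i\<in>I. (c i :: real) *\<^sub>R w i x)"
  unfolding LI_def
proof (intro allI impI)
  fix \<psi> :: "real^'n \<Rightarrow> real" and g :: "real^'n \<Rightarrow> real^'n" and M :: "real^'n \<Rightarrow> real^'n^'n"
  assume t: "test_fn \<psi> g" and b: "bm M"
  have eq: "(\<lambda>x. (M x *v (\<Sum>i\<in>I. c i *\<^sub>R w i x)) \<bullet> g x) = (\<lambda>x. \<Sum>i\<in>I. c i * ((M x *v w i x) \<bullet> g x))"
    by (simp add: linear_sum[OF matrix_vector_mul_linear] inner_sum_left linear_scale[OF matrix_vector_mul_linear])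
  show "integrable lborel (\<lambda>x. (M x *v (\<Sum>i\<in>I. c i *\<^sub>R w i x)) \<bullet> g x)"
    unfolding eq using assms t b unfolding LI_def
    by (intro Bochner_Integration.integrable_sum Bochner_Integration.integrable_mult_right) auto
qed

lemma LI_gdelta:
  assumes "\<And>E. H1_uloc (phi E) (Dphi E)"
  shows "LI (\<lambda>x. gdelta Dphi \<xi> P Q x)"
proof (cases "finite P")
  case True
  have "LI (\<lambda>x. \<Sum>G\<in>Pow P. ((-1::real) ^ card (P - G)) *\<^sub>R (Dphi (G \<union> Q) x + \<xi>))"
    using True by (intro LI_sum) (auto simp: LI_def intro: loc_int[OF assms])
  then show ?thesis unfolding gdelta_def .
next
  case False
  then show ?thesis unfolding gdelta_def LI_def by simp
qed



lemma weak_sol_sum: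
  fixes u :: "'i \<Rightarrow> real^'n \<Rightarrow> real" and Q :: "'i \<Rightarrow> real^'n \<Rightarrow> real^'n"
  assumes fin: "finite I" and ws: "\<And>i. i \<in> I \<Longrightarrow> weak_sol T (u i) (Q i) (\<lambda>x. 0)"
  shows "weak_sol T (\<lambda>x. \<Sum>i\<in>I. c i * u i x) (\<lambda>x. \<Sum>i\<in>I. c i *\<^sub>R Q i x) (\<lambda>x. 0)"
  unfolding weak_sol_def
proof (intro allI impI)
  fix \<psi> :: "real^'n \<Rightarrow> real" and g :: "real^'n \<Rightarrow> real^'n"
  assume t: "test_fn \<psi> g"
  have i1: "\<And>i. i \<in> I \<Longrightarrow> integrable lborel (\<lambda>x. u i x * \<psi> x)"
    and i2: "\<And>i. i \<in> I \<Longrightarrow> integrable lborel (\<lambda>x. Q i x \<bullet> g x)"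
    and e: "\<And>i. i \<in> I \<Longrightarrow> (1 / T) * (\<integral>x. u i x * \<psi> x \<partial>lborel) + (\<integral>x. Q i x \<bullet> g x \<partial>lborel) = 0"
    using ws t unfolding weak_sol_def by auto
  have r1: "(\<lambda>x. (\<Sum>i\<in>I. c i * u i x) * \<psi> x) = (\<lambda>x. \<Sum>i\<in>I. c i * (u i x * \<psi> x))"
    by (simp add: sum_distrib_right mult.assoc)
  have r2: "(\<lambda>x. (\<Sum>i\<in>I. c i *\<^sub>R Q i x) \<bullet> g x) = (\<lambda>x. \<Sum>i\<in>I. c i * (Q i x \<bullet> g x))"
    by (simp add: inner_sum_left)
  show "integrable lborel (\<lambda>x. (\<Sum>i\<in>I. c i * u i x) * \<psi> x) \<and>
        integrable lborel (\<lambda>x. (\<Sum>i\<in>I. c i *\<^sub>R Q i x) \<bullet> g x) \<and>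
        integrable lborel (\<lambda>x. (0::real^'n) \<bullet> g x) \<and>
        1 / T * (\<integral>x. (\<Sum>i\<in>I. c i * u i x) * \<psi> x \<partial>lborel) + (\<integral>x. (\<Sum>i\<in>I. c i *\<^sub>R Q i x) \<bullet> g x \<partial>lborel) =
        - (\<integral>x. (0::real^'n) \<bullet> g x \<partial>lborel)"
  proof (intro conjI)
    show "integrable lborel (\<lambda>x. (\<Sum>i\<in>I. c i * u i x) * \<psi> x)" unfolding r1
      using i1 by (intro Bochner_Integration.integrable_sum Bochner_Integration.integrable_mult_right) auto
    show "integrable lborel (\<lambda>x. (\<Sum>i\<in>I. c i *\<^sub>R Q i x) \<bullet> g x)" unfolding r2
      using i2 by (intro Bochner_Integration.integrable_sum Bochner_Integration.integrable_mult_right) auto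
    show "integrable lborel (\<lambda>x. (0::real^'n) \<bullet> g x)" by simp
    have "1 / T * (\<integral>x. (\<Sum>i\<in>I. c i * u i x) * \<psi> x \<partial>lborel) + (\<integral>x. (\<Sum>i\<in>I. c i *\<^sub>R Q i x) \<bullet> g x \<partial>lborel)
        = (\<Sum>i\<in>I. c i * ((1 / T) * (\<integral>x. u i x * \<psi> x \<partial>lborel) + (\<integral>x. Q i x \<bullet> g x \<partial>lborel)))"
    proof -
      have I1: "(\<integral>x. (\<Sum>i\<in>I. c i * (u i x * \<psi> x)) \<partial>lborel) = (\<Sum>i\<in>I. c i * (\<integral>x. u i x * \<psi> x \<partial>lborel))"
        by (subst Bochner_Integration.integral_sum) (use i1 in auto)
      have I2: "(\<integral>x. (\<Sum>i\<in>I. c i * (Q i x \<bullet> g x)) \<partial>lborel) = (\<Sum>i\<in>I. c i * (\<integral>x. Q i x \<bullet> g x \<partial>lborel))"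
        by (subst Bochner_Integration.integral_sum) (use i2 in auto)
      show ?thesis unfolding r1 r2 I1 I2
        by (simp add: distrib_left sum.distrib sum_distrib_left mult.left_commute)
    qed
    also have "\<dots> = 0" using e by simp
    finally show "1 / T * (\<integral>x. (\<Sum>i\<in>I. c i * u i x) * \<psi> x \<partial>lborel) + (\<integral>x. (\<Sum>i\<in>I. c i *\<^sub>R Q i x) \<bullet> g x \<partial>lborel) =
        - (\<integral>x. (0::real^'n) \<bullet> g x \<partial>lborel)" by simp
  qed
qed

lemma weak_sol_transfer:
  fixes u u' :: "real^'n \<Rightarrow> real" and Q q f :: "real^'n \<Rightarrow> real^'n"
  assumes ws: "weak_sol T u Q (\<lambda>x. 0)" and uu: "\<And>x. u' x = u x" and QQ: "\<And>x. Q x = q x + f x"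
    and fi: "\<And>\<psi> g. test_fn \<psi> g \<Longrightarrow> integrable lborel (\<lambda>x. f x \<bullet> g x)"
  shows "weak_sol T u' q f"
  unfolding weak_sol_def
proof (intro allI impI)
  fix \<psi> :: "real^'n \<Rightarrow> real" and g :: "real^'n \<Rightarrow> real^'n"
  assume t: "test_fn \<psi> g"
  have i1: "integrable lborel (\<lambda>x. u x * \<psi> x)" and i2: "integrable lborel (\<lambda>x. Q x \<bullet> g x)"
    and e: "(1 / T) * (\<integral>x. u x * \<psi> x \<partial>lborel) + (\<integral>x. Q x \<bullet> g x \<partial>lborel) = 0"
    using ws t unfolding weak_sol_def by auto
  have i3: "integrable lborel (\<lambda>x. f x \<bullet> g x)" using fi[OF t] .
  have r: "(\<lambda>x. q x \<bullet> g x) = (\<lambda>x. Q x \<bullet> g x - f x \<bullet> g x)" using QQ by (simp add: inner_add_left)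
  have u': "u' = u" using uu by auto
  have i4: "integrable lborel (\<lambda>x. q x \<bullet> g x)" unfolding r using i2 i3 by simp
  have "(\<integral>x. q x \<bullet> g x \<partial>lborel) = (\<integral>x. Q x \<bullet> g x \<partial>lborel) - (\<integral>x. f x \<bullet> g x \<partial>lborel)"
    unfolding r using i2 i3 by simp
  then show "integrable lborel (\<lambda>x. u' x * \<psi> x) \<and> integrable lborel (\<lambda>x. q x \<bullet> g x) \<and>
        integrable lborel (\<lambda>x. f x \<bullet> g x) \<and>
        1 / T * (\<integral>x. u' x * \<psi> x \<partial>lborel) + (\<integral>x. q x \<bullet> g x \<partial>lborel) = - (\<integral>x. f x \<bullet> g x \<partial>lborel)"
    using i1 i3 i4 e unfolding u' by simp
qed

lemma alt_sum_zero:
  assumes "finite P" "P \<noteq> {}"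
  shows "(\<Sum>G\<in>Pow P. (-1::real) ^ card (P - G)) = 0"
proof -
  obtain r where r: "r \<in> P" using assms(2) by blast
  define P' where "P' = P - {r}"
  have P: "P = insert r P'" "r \<notin> P'" using r unfolding P'_def by auto
  have fP': "finite P'" using assms(1) P by auto
  have disj: "Pow P' \<inter> insert r ` Pow P' = {}" using P(2) by auto
  have inj: "inj_on (insert r) (Pow P')" using P(2) by (intro inj_onI) (metis Diff_insert_absorb PowD in_mono)
  have "(\<Sum>G\<in>Pow P. (-1::real) ^ card (P - G)) = (\<Sum>G\<in>Pow P'. (-1::real) ^ card (insert r P' - G)) + (\<Sum>G\<in>Pow P'. (-1::real) ^ card (insert r P' - insert r G))"
    unfolding P Pow_insert using fP' disj by (simp add: sum.union_disjoint sum.reindex[OF inj])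
  also have "\<dots> = 0" unfolding sum.distrib[symmetric]
  proof (rule sum.neutral, rule ballI)
    fix G assume G: "G \<in> Pow P'"
    then have "insert r P' - G = insert r (P' - G)" "r \<notin> P' - G" "finite (P' - G)" "insert r P' - insert r G = P' - G"
      using P fP' by auto
    then show "(-1::real) ^ card (insert r P' - G) + (-1) ^ card (insert r P' - insert r G) = 0" by simp
  qed
  finally show ?thesis .
qed

lemma delta_eq:
  assumes "finite P" "P \<noteq> {}"
  shows "delta phi \<xi> P H x = (\<Sum>G\<in>Pow P. (-1::real) ^ card (P - G) * phi (G \<union> H) x)"
proof -
  have "delta phi \<xi> P H x = (\<Sum>G\<in>Pow P. (-1::real) ^ card (P - G) * phi (G \<union> H) x) + (\<Sum>G\<in>Pow P. (-1::real) ^ card (P - G)) * (\<xi> \<bullet> x)"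
    unfolding delta_def by (simp add: distrib_left sum.distrib sum_distrib_right)
  then show ?thesis using alt_sum_zero[OF assms] by simp
qed



lemma gd_mv: fixes D :: "real^'n^'n" shows "D *v gd v P Q = gd (\<lambda>W. D *v v W) P Q"
  unfolding gd_def by (simp add: linear_sum[OF matrix_vector_mul_linear] matrix_vector_mult_scaleR)

lemma pw:
  fixes M0 D :: "real^'n^'n" and v :: "nat set \<Rightarrow> real^'n"
  assumes fF: "finite F" and fG: "finite G" and d1: "F \<inter> G = {}" and d2: "F \<inter> H = {}" and d3: "G \<inter> H = {}"
  shows "(\<Sum>W\<in>Pow (F \<union> G). ((-1::real) ^ card ((F \<union> G) - W)) *\<^sub>R ((M0 + (if \<exists>n\<in>W \<union> H. act n then D else 0)) *v v (W \<union> H)))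
   = (M0 + (if \<exists>n\<in>F \<union> H. act n then D else 0)) *v gd v (F \<union> G) H
     + (\<Sum>S\<in>Pow F. \<Sum>U\<in>Pow G. ((-1::real) ^ (card S + card U + 1)) *\<^sub>R
         ((if S \<union> U \<noteq> {} \<and> (\<forall>n\<in>S \<union> U. act n) \<and> (\<forall>n\<in>H \<union> (F - S). \<not> act n) then D else 0)
            *v gd v ((F - S) \<union> (G - U)) (U \<union> H)))"
proof -
  let ?v' = "\<lambda>W. D *v v W"
  have ifm: "\<And>b w. (M0 + (if b then D else 0)) *v w = M0 *v w + (if b then D *v w else 0)"
    by (simp add: matrix_vector_mult_add_rdistrib)
  have ifc: "\<And>b w. (if b then D else 0) *v w = (if b then D *v w else 0)"
    by simp
  have L: "(\<Sum>W\<in>Pow (F \<union> G). ((-1::real) ^ card ((F \<union> G) - W)) *\<^sub>R ((M0 + (if \<exists>n\<in>W \<union> H. act n then D else 0)) *v v (W \<union> H)))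
     = M0 *v gd v (F \<union> G) H + (\<Sum>W\<in>Pow (F \<union> G). ((-1::real) ^ card ((F \<union> G) - W)) *\<^sub>R
         (if (\<exists>n\<in>W \<union> H. act n) then ?v' (W \<union> H) else 0))"
    unfolding ifm gd_def scaleR_add_right sum.distrib
    by (simp add: linear_sum[OF matrix_vector_mul_linear] matrix_vector_mult_scaleR)
  have R: "(M0 + (if \<exists>n\<in>F \<union> H. act n then D else 0)) *v gd v (F \<union> G) H
     + (\<Sum>S\<in>Pow F. \<Sum>U\<in>Pow G. ((-1::real) ^ (card S + card U + 1)) *\<^sub>R
         ((if S \<union> U \<noteq> {} \<and> (\<forall>n\<in>S \<union> U. act n) \<and> (\<forall>n\<in>H \<union> (F - S). \<not> act n) then D else 0)
            *v gd v ((F - S) \<union> (G - U)) (U \<union> H)))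
     = M0 *v gd v (F \<union> G) H + ((if (\<exists>n\<in>F \<union> H. act n) then gd ?v' (F \<union> G) H else 0)
    + (\<Sum>S\<in>Pow F. \<Sum>U\<in>Pow G. ((-1::real) ^ (card S + card U + 1)) *\<^sub>R
         (if S \<union> U \<noteq> {} \<and> (\<forall>n\<in>S \<union> U. act n) \<and> (\<forall>n\<in>H \<union> (F - S). \<not> act n)
          then gd ?v' ((F - S) \<union> (G - U)) (U \<union> H) else 0)))"
    unfolding ifm ifc gd_mv[of D] by (simp only: add.assoc)
  show ?thesis unfolding L R comb[OF assms, of act ?v'] ..
qed


lemma AU_eq: "AU A A' J E x = A x + (if \<exists>n\<in>E. x \<in> J n then A' x - A x else 0)"
  unfolding AU_def CU_def JU_def by auto

lemma Csep_eq: "Csep A A' J E L x = (if E \<noteq> {} \<and> (\<forall>n\<in>E. x \<in> J n) \<and> (\<forall>n\<in>L. x \<notin> J n) then A' x - A x else 0)"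
  unfolding Csep_def Jsep_def by auto

lemma gdelta_eq: "gdelta Dphi \<xi> P Q x = gd (\<lambda>W. Dphi W x + \<xi>) P Q"
  unfolding gdelta_def gd_def by simp

lemma gen_case:
  fixes A A' :: "real^'n \<Rightarrow> real^'n^'n"
    and J :: "nat \<Rightarrow> (real^'n) set"
    and T :: real and \<xi> :: "real^'n"
    and phi :: "nat set \<Rightarrow> real^'n \<Rightarrow> real"
    and Dphi :: "nat set \<Rightarrow> real^'n \<Rightarrow> real^'n"
  assumes ellA: "sym_unif_elliptic A" and ellA': "sym_unif_elliptic A'"
    and J_borel: "\<And>n. J n \<in> sets borel"
    and phi_class: "\<And>E. H1_uloc (phi E) (Dphi E)"
    and phi_eq: "\<And>E. weak_sol T (phi E) (\<lambda>x. AU A A' J E x *v (Dphi E x + \<xi>)) (\<lambda>x. 0)"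
    and fF: "finite F" and fG: "finite G" and d1: "F \<inter> G = {}" and d2: "F \<inter> H = {}" and d3: "G \<inter> H = {}"
    and ne: "F \<union> G \<noteq> {}"
  shows "weak_sol T (delta phi \<xi> (F \<union> G) H)
         (\<lambda>x. AU A A' J (F \<union> H) x *v gdelta Dphi \<xi> (F \<union> G) H x)
         (\<lambda>x. \<Sum>S\<in>Pow F. \<Sum>U\<in>Pow G. ((-1) ^ (card S + card U + 1)) *\<^sub>R
                (Csep A A' J (S \<union> U) (H \<union> (F - S)) x *v
                   gdelta Dphi \<xi> ((F - S) \<union> (G - U)) (U \<union> H) x))"
proof -
  have fP: "finite (F \<union> G)" using fF fG by simp
  have ws: "weak_sol T (\<lambda>x. \<Sum>W\<in>Pow (F \<union> G). (-1::real) ^ card ((F \<union> G) - W) * phi (W \<union> H) x)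
     (\<lambda>x. \<Sum>W\<in>Pow (F \<union> G). ((-1::real) ^ card ((F \<union> G) - W)) *\<^sub>R (AU A A' J (W \<union> H) x *v (Dphi (W \<union> H) x + \<xi>))) (\<lambda>x. 0)"
    by (rule weak_sol_sum) (use fP phi_eq in auto)
  show ?thesis
  proof (rule weak_sol_transfer[OF ws])
    fix x
    show "delta phi \<xi> (F \<union> G) H x = (\<Sum>W\<in>Pow (F \<union> G). (-1::real) ^ card ((F \<union> G) - W) * phi (W \<union> H) x)"
      by (rule delta_eq[OF fP ne])
  next
    fix x
    show "(\<Sum>W\<in>Pow (F \<union> G). ((-1::real) ^ card ((F \<union> G) - W)) *\<^sub>R (AU A A' J (W \<union> H) x *v (Dphi (W \<union> H) x + \<xi>)))
      = AU A A' J (F \<union> H) x *v gdelta Dphi \<xi> (F \<union> G) H x + (\<Sum>S\<in>Pow F. \<Sum>U\<in>Pow G. ((-1) ^ (card S + card U + 1)) *\<^sub>R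
                (Csep A A' J (S \<union> U) (H \<union> (F - S)) x *v
                   gdelta Dphi \<xi> ((F - S) \<union> (G - U)) (U \<union> H) x))"
      unfolding AU_eq Csep_eq gdelta_eq
      using pw[OF fF fG d1 d2 d3, of "A x" "\<lambda>n. x \<in> J n" "A' x - A x" "\<lambda>W. Dphi W x + \<xi>"] by simp
  next
    fix \<psi> :: "real^'n \<Rightarrow> real" and g :: "real^'n \<Rightarrow> real^'n"
    assume t: "test_fn \<psi> g"
    have eq: "(\<lambda>x. (\<Sum>S\<in>Pow F. \<Sum>U\<in>Pow G. ((-1::real) ^ (card S + card U + 1)) *\<^sub>R
                (Csep A A' J (S \<union> U) (H \<union> (F - S)) x *v
                   gdelta Dphi \<xi> ((F - S) \<union> (G - U)) (U \<union> H) x)) \<bullet> g x)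
      = (\<lambda>x. \<Sum>S\<in>Pow F. \<Sum>U\<in>Pow G. ((-1::real) ^ (card S + card U + 1)) *
                ((Csep A A' J (S \<union> U) (H \<union> (F - S)) x *v
                   gdelta Dphi \<xi> ((F - S) \<union> (G - U)) (U \<union> H) x) \<bullet> g x))"
      by (simp add: inner_sum_left)
    have li: "\<And>P Q. LI (\<lambda>x. gdelta Dphi \<xi> P Q x)" by (rule LI_gdelta[OF phi_class])
    show "integrable lborel (\<lambda>x. (\<Sum>S\<in>Pow F. \<Sum>U\<in>Pow G. ((-1::real) ^ (card S + card U + 1)) *\<^sub>R
                (Csep A A' J (S \<union> U) (H \<union> (F - S)) x *v
                   gdelta Dphi \<xi> ((F - S) \<union> (G - U)) (U \<union> H) x)) \<bullet> g x)"
      unfolding eq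
      using li t bm_Csep[OF ellA ellA' J_borel] unfolding LI_def
      by (intro Bochner_Integration.integrable_sum Bochner_Integration.integrable_mult_right) auto
  qed
qed

theorem lemma4p1:
  fixes A A' :: "real^'n \<Rightarrow> real^'n^'n"
    and J :: "nat \<Rightarrow> (real^'n) set"
    and \<Gamma> :: nat
    and T :: real and \<xi> :: "real^'n"
    and phi :: "nat set \<Rightarrow> real^'n \<Rightarrow> real"
    and Dphi :: "nat set \<Rightarrow> real^'n \<Rightarrow> real^'n"
  assumes ellA: "sym_unif_elliptic A" and ellA': "sym_unif_elliptic A'"
    and J_borel: "\<And>n. J n \<in> sets borel" and J_bdd: "\<And>n. bounded (J n)"
    and J_overlap: "\<And>x. finite {n. x \<in> J n} \<and> card {n. x \<in> J n} \<le> \<Gamma>"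
    and T_pos: "T > 0" and xi_unit: "norm \<xi> = 1"
    and phi_class: "\<And>E. H1_uloc (phi E) (Dphi E)"
    and phi_eq: "\<And>E. weak_sol T (phi E) (\<lambda>x. AU A A' J E x *v (Dphi E x + \<xi>)) (\<lambda>x. 0)"
  shows
   "(\<forall>F H. finite F \<and> F \<noteq> {} \<and> F \<inter> H = {} \<longrightarrow>
       weak_sol T (delta phi \<xi> F H)
         (\<lambda>x. AU A A' J (F \<union> H) x *v gdelta Dphi \<xi> F H x)
         (\<lambda>x. \<Sum>S\<in>Pow F. ((-1) ^ (card S + 1)) *\<^sub>R
                (Csep A A' J S (H \<union> (F - S)) x *v gdelta Dphi \<xi> (F - S) H x))
     \<and> weak_sol T (delta phi \<xi> F H)
         (\<lambda>x. AU A A' J H x *v gdelta Dphi \<xi> F H x)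
         (\<lambda>x. \<Sum>S\<in>Pow F. ((-1) ^ (card S + 1)) *\<^sub>R
                (Csep A A' J S H x *v gdelta Dphi \<xi> (F - S) (S \<union> H) x)))
    \<and> (\<forall>F G H. finite F \<and> finite G \<and> F \<inter> G = {} \<and> F \<inter> H = {} \<and> G \<inter> H = {} \<and> F \<union> G \<noteq> {} \<longrightarrow>
       weak_sol T (delta phi \<xi> (F \<union> G) H)
         (\<lambda>x. AU A A' J (F \<union> H) x *v gdelta Dphi \<xi> (F \<union> G) H x)
         (\<lambda>x. \<Sum>S\<in>Pow F. \<Sum>U\<in>Pow G. ((-1) ^ (card S + card U + 1)) *\<^sub>R
                (Csep A A' J (S \<union> U) (H \<union> (F - S)) x *v
                   gdelta Dphi \<xi> ((F - S) \<union> (G - U)) (U \<union> H) x)))"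
  proof -
  have G: "\<And>F G H. finite F \<Longrightarrow> finite G \<Longrightarrow> F \<inter> G = {} \<Longrightarrow> F \<inter> H = {} \<Longrightarrow> G \<inter> H = {} \<Longrightarrow> F \<union> G \<noteq> {} \<Longrightarrow>
       weak_sol T (delta phi \<xi> (F \<union> G) H)
         (\<lambda>x. AU A A' J (F \<union> H) x *v gdelta Dphi \<xi> (F \<union> G) H x)
         (\<lambda>x. \<Sum>S\<in>Pow F. \<Sum>U\<in>Pow G. ((-1) ^ (card S + card U + 1)) *\<^sub>R
                (Csep A A' J (S \<union> U) (H \<union> (F - S)) x *v
                   gdelta Dphi \<xi> ((F - S) \<union> (G - U)) (U \<union> H) x))"
    by (rule gen_case[OF ellA ellA' J_borel phi_class phi_eq]) 
  show ?thesis
  proof (intro conjI allI impI)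
    fix F H :: "nat set"
    assume a: "finite F \<and> F \<noteq> {} \<and> F \<inter> H = {}"
    show "weak_sol T (delta phi \<xi> F H)
         (\<lambda>x. AU A A' J (F \<union> H) x *v gdelta Dphi \<xi> F H x)
         (\<lambda>x. \<Sum>S\<in>Pow F. ((-1) ^ (card S + 1)) *\<^sub>R
                (Csep A A' J S (H \<union> (F - S)) x *v gdelta Dphi \<xi> (F - S) H x))"
      using G[of F "{}" H] a by simp
    show "weak_sol T (delta phi \<xi> F H)
         (\<lambda>x. AU A A' J H x *v gdelta Dphi \<xi> F H x)
         (\<lambda>x. \<Sum>S\<in>Pow F. ((-1) ^ (card S + 1)) *\<^sub>R
                (Csep A A' J S H x *v gdelta Dphi \<xi> (F - S) (S \<union> H) x))"
      using G[of "{}" F H] a by simp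
  next
    fix F G H :: "nat set"
    assume "finite F \<and> finite G \<and> F \<inter> G = {} \<and> F \<inter> H = {} \<and> G \<inter> H = {} \<and> F \<union> G \<noteq> {}"
    then show "weak_sol T (delta phi \<xi> (F \<union> G) H)
         (\<lambda>x. AU A A' J (F \<union> H) x *v gdelta Dphi \<xi> (F \<union> G) H x)
         (\<lambda>x. \<Sum>S\<in>Pow F. \<Sum>U\<in>Pow G. ((-1) ^ (card S + card U + 1)) *\<^sub>R
                (Csep A A' J (S \<union> U) (H \<union> (F - S)) x *v
                   gdelta Dphi \<xi> ((F - S) \<union> (G - U)) (U \<union> H) x))"
      using G by blast
  qed
qed

end
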